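(* Consider the time-minimization problem $T\to\min$ for the control system on the upper half-plane $L^2=\{(x,y)\in\mathbb{R}^2: y>0\}$ $$\dot x = y u_1,\qquad \dot y = y u_2,\qquad u=(u_1,u_2)\in\Omega,$$ where $\Omega\subset\mathbb{R}^2$ is a convex compact set with $0\in\operatorname{int}\Omega$. Every geodesic (trajectory of an extremal given by the Pontryagin maximum principle for this problem) is of one of the following two types: (h) Horizontal geodesics: such a geodesic is obtained from the polar set $\Omega^\circ$ by (i) rotating $\Omega^\circ$ by $+90^\circ$ or $-90^\circ$ about the origin, (ii) stretching it by a factor $\lambda>0$, (iii) taking the part of the boundary of the resulting set lying in the upper half-plane, and (iv) translating this part horizontally by an arbitrary distance; the geodesic moves along (a piece of) this curve. If $\Omega^\circ$ was rotated clockwise then the motion along the geodesic is counterclockwise, and vice versa. (v) Vertical geodesics: a vertical geodesic moving up is obtained by choosing an arbitrary measurable control $u(t)\in\Omega$ such that, for a.e. $t$, $u(t)$ has the maximal possible $u_2$-coordinate among points of $\Omega$ (so $u_2$ is a constant); the corresponding geodesic starting at $(x_0,y_0)$ is $$x(t)=x_0+y_0\int_0^t e^{u_2 s}u_1(s)\,ds,\qquad y(t)=y_0e^{u_2 t}.$$ Vertical geodesics moving down are constructed in the same way, taking $u(t)\in\Omega$ with the minimal possible $u_2$-coordinate in $\Omega$ for all $t$.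
   Context: The polar set of $\Omega$ is $\Omega^\circ=\{(p,q)\in\mathbb{R}^2: px+qy\le 1 \text{ for all } (x,y)\in\Omega\}$. The problem defines a Finsler structure on $L^2$ in which the length of a tangent vector $(\xi,\eta)$ at $(x,y)$ is $y\,\mu_\Omega(\xi,\eta)$, $\mu_\Omega$ being the Minkowski gauge of $\Omega$. *)

theory Defs
  imports "HOL-Analysis.Analysis"
begin

definition polar :: "(real \<times> real) set \<Rightarrow> (real \<times> real) set" where
  "polar \<Omega> = {(p, q). \<forall>(a, b) \<in> \<Omega>. p * a + q * b \<le> 1}"

text \<open>Rotation by sigma * 90 degrees about the origin (sigma = 1: counterclockwise,
  i.e. +90 degrees; sigma = -1: clockwise, i.e. -90 degrees).\<close>
definition rot90 :: "real \<Rightarrow> real \<times> real \<Rightarrow> real \<times> real" where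
  "rot90 \<sigma> v = (- \<sigma> * snd v, \<sigma> * fst v)"

text \<open>Pontryagin extremal on the time interval [0,T] for the time-minimal problem
  x' = y u1, y' = y u2, u \<in> \<Omega>, on the upper half-plane, with Hamiltonian
  H = y (p u1 + q u2). The covector (p,q) satisfies p' = -dH/dx = 0 and
  q' = -dH/dy = -(p u1 + q u2); it never vanishes; the control maximizes H a.e.;
  and the maximum of H is a non-negative constant a.e.
  All ODEs are in integral (absolutely continuous / Caratheodory) form.\<close>
definition extremal ::
  "(real \<times> real) set \<Rightarrow> real \<Rightarrow> (real \<Rightarrow> real \<times> real) \<Rightarrow> (real \<Rightarrow> real) \<Rightarrow> (real \<Rightarrow> real)
    \<Rightarrow> (real \<Rightarrow> real) \<Rightarrow> (real \<Rightarrow> real) \<Rightarrow> bool" where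
  "extremal \<Omega> T u x y p q \<longleftrightarrow>
     u \<in> borel_measurable (lebesgue_on {0..T}) \<and>
     (\<forall>t\<in>{0..T}. u t \<in> \<Omega>) \<and>
     (\<forall>t\<in>{0..T}. y t > 0) \<and>
     (\<forall>t\<in>{0..T}. ((\<lambda>s. y s * fst (u s)) has_integral (x t - x 0)) {0..t}) \<and>
     (\<forall>t\<in>{0..T}. ((\<lambda>s. y s * snd (u s)) has_integral (y t - y 0)) {0..t}) \<and>
     (\<forall>t\<in>{0..T}. p t = p 0) \<and>
     (\<forall>t\<in>{0..T}. ((\<lambda>s. - (p s * fst (u s) + q s * snd (u s))) has_integral (q t - q 0)) {0..t}) \<and>
     (\<forall>t\<in>{0..T}. (p t, q t) \<noteq> (0, 0)) \<and>
     (AE t in lebesgue. t \<in> {0..T} \<longrightarrow>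
        (\<forall>v\<in>\<Omega>. y t * (p t * fst v + q t * snd v) \<le> y t * (p t * fst (u t) + q t * snd (u t)))) \<and>
     (\<exists>h\<ge>0. AE t in lebesgue. t \<in> {0..T} \<longrightarrow>
        y t * (p t * fst (u t) + q t * snd (u t)) = h)"

end

theory Submission
  imports Defs
begin

lemma int_sub:
  fixes f :: "real \<Rightarrow> real"
  assumes "(f has_integral A) {0..t}" "(f has_integral B) {0..s}" "0 \<le> s" "s \<le> t"
  shows "(f has_integral (A - B)) {s..t}"
proof -
  have "f integrable_on {s..t}"
    using integrable_subinterval_real[of f 0 t s t] assms has_integral_integrable by auto
  then obtain j where j: "(f has_integral j) {s..t}" by blast
  from has_integral_combine[OF assms(3,4) assms(2) j] have "(f has_integral B + j) {0..t}" .
  then have "A = B + j" using has_integral_unique assms(1) by blast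
  then show ?thesis using j by simp
qed

lemma cont_int:
  fixes f X :: "real \<Rightarrow> real" and T :: real
  assumes "\<forall>t\<in>{0..T}. (f has_integral (X t - X 0)) {0..t}" "0 \<le> T"
  shows "continuous_on {0..T} X"
proof -
  have TT: "T \<in> {0..T}" using assms(2) by simp
  have fT: "(f has_integral (X T - X 0)) {0..T}" using assms(1) TT by blast
  have fi: "f integrable_on {0..T}" using fT by (rule has_integral_integrable)
  have c: "continuous_on {0..T} (\<lambda>t. X 0 + integral {0..t} f)"
    by (rule continuous_on_add[OF continuous_on_const indefinite_integral_continuous_1[OF fi]])
  have eq: "X 0 + integral {0..t} f = X t" if "t \<in> {0..T}" for t
  proof -
    have "(f has_integral (X t - X 0)) {0..t}" using assms(1) that by blast
    then have "integral {0..t} f = X t - X 0" by (rule integral_unique)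
    then show ?thesis by simp
  qed
  show ?thesis by (rule continuous_on_eq[OF c eq])
qed

lemma ae_exists:
  fixes T a b :: real and P :: "real \<Rightarrow> bool"
  assumes "AE t in lebesgue. t \<in> {0..T} \<longrightarrow> P t" "0 \<le> a" "a < b" "b \<le> T"
  shows "\<exists>t\<in>{a..b}. P t"
proof (rule ccontr)
  assume na: "\<not> ?thesis"
  obtain N where N: "N \<in> null_sets lebesgue" "{t \<in> space lebesgue. \<not> (t \<in> {0..T} \<longrightarrow> P t)} \<subseteq> N"
    using assms(1) unfolding eventually_ae_filter by blast
  have "{a..b} \<subseteq> N"
  proof
    fix x
    assume xab: "x \<in> {a..b}"
    have "x \<in> {0..T}" using xab assms(2,4) by auto
    moreover have "\<not> P x" using na xab by blast
    ultimately have "x \<in> {t \<in> space lebesgue. \<not> (t \<in> {0..T} \<longrightarrow> P t)}" by simp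
    then show "x \<in> N" using N(2) by blast
  qed
  then have "negligible {a..b}" using N(1) negligible_iff_null_sets negligible_subset by blast
  then show False using assms negligible_interval(1)[of a b] by auto
qed

lemma ae_closed:
  fixes w :: "real \<Rightarrow> 'a::metric_space" and T t :: real and P :: "real \<Rightarrow> bool"
  assumes "AE t in lebesgue. t \<in> {0..T} \<longrightarrow> P t" "0 < T" "continuous_on {0..T} w" "closed K"
    "\<And>t. t\<in>{0..T} \<Longrightarrow> P t \<Longrightarrow> w t \<in> K" "t \<in> {0..T}"
  shows "w t \<in> K"
proof -
  let ?C = "{0..T} \<inter> w -` K"
  have cl: "closed ?C" using continuous_closed_preimage[OF assms(3)] assms(4) by auto
  have "\<exists>s\<in>?C. dist s t < e" if e: "e > 0" for e
  proof -
    have "\<exists>s\<in>{max 0 (t - e/2)..min T (t + e/2)}. P s"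
      by (intro ae_exists[OF assms(1)]) (use assms(2,6) e in auto)
    then obtain s where s: "s \<in> {max 0 (t - e/2)..min T (t + e/2)}" "P s" by blast
    then have "s \<in> ?C" using assms(5) by auto
    moreover have "dist s t < e" using s e by (auto simp: dist_real_def)
    ultimately show ?thesis by blast
  qed
  then have "t \<in> ?C" using closed_approachable[OF cl] by blast
  then show ?thesis by auto
qed

lemma vert:
  fixes T M :: real and x y :: "real \<Rightarrow> real" and u :: "real \<Rightarrow> real \<times> real"
  assumes xI: "\<forall>t\<in>{0..T}. ((\<lambda>s. y s * fst (u s)) has_integral (x t - x 0)) {0..t}"
    and yI: "\<forall>t\<in>{0..T}. ((\<lambda>s. y s * snd (u s)) has_integral (y t - y 0)) {0..t}"
    and ae: "AE t in lebesgue. t \<in> {0..T} \<longrightarrow> snd (u t) = M"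
    and T: "0 < T" and y0: "y 0 > 0"
  shows "\<forall>t\<in>{0..T}. x t = x 0 + y 0 * integral {0..t} (\<lambda>s. exp (M * s) * fst (u s)) \<and>
                     y t = y 0 * exp (M * t)"
proof -
  obtain N where N: "N \<in> null_sets lebesgue" "{t \<in> space lebesgue. \<not> (t \<in> {0..T} \<longrightarrow> snd (u t) = M)} \<subseteq> N"
    using ae unfolding eventually_ae_filter by blast
  have negN: "negligible N" using N(1) negligible_iff_null_sets by blast
  have yI': "((\<lambda>s. M * y s) has_integral (y t - y 0)) {0..t}" if t: "t \<in> {0..T}" for t
  proof -
    have f: "((\<lambda>s. y s * snd (u s)) has_integral (y t - y 0)) {0..t}" using yI t by blast
    have eq: "M * y s = y s * snd (u s)" if "s \<in> {0..t} - N" for s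
    proof -
      have "s \<in> {0..T}" "s \<notin> N" using that t by auto
      then have "snd (u s) = M" using N(2) by auto
      then show ?thesis by simp
    qed
    have iff: "((\<lambda>s. y s * snd (u s)) has_integral (y t - y 0)) {0..t} \<longleftrightarrow> ((\<lambda>s. M * y s) has_integral (y t - y 0)) {0..t}"
      by (rule has_integral_spike_eq[OF negN]) (rule eq)
    show ?thesis using iff f by blast
  qed
  have yI'': "\<forall>t\<in>{0..T}. ((\<lambda>s. M * y s) has_integral (y t - y 0)) {0..t}" using yI' by blast
  have yc: "continuous_on {0..T} y" by (rule cont_int[OF yI'' less_imp_le[OF T]])
  have gc: "continuous_on {0..T} (\<lambda>s. M * y s)" using yc by (intro continuous_intros)
  have yeq: "y t = y 0 + integral {0..t} (\<lambda>s. M * y s)" if "t \<in> {0..T}" for t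
  proof -
    have "integral {0..t} (\<lambda>s. M * y s) = y t - y 0" using yI'[OF that] by (rule integral_unique)
    then show ?thesis by simp
  qed
  have yd: "(y has_real_derivative M * y t) (at t within {0..T})" if t: "t \<in> {0..T}" for t
  proof -
    have "((\<lambda>t. y 0 + integral {0..t} (\<lambda>s. M * y s)) has_real_derivative M * y t) (at t within {0..T})"
      using DERIV_add[OF DERIV_const integral_has_real_derivative[OF gc t]] by simp
    then show ?thesis
    proof (rule has_field_derivative_transform_within[where d=1])
      show "(0::real) < 1" by simp
      show "t \<in> {0..T}" by (rule t)
      fix s assume s: "s \<in> {0..T}" "dist s t < 1"
      have "y s = y 0 + integral {0..s} (\<lambda>s. M * y s)" by (rule yeq[OF s(1)])
      then show "y 0 + integral {0..s} (\<lambda>s. M * y s) = y s" by simp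
    qed
  qed
  have Gd: "((\<lambda>t. y t * exp (- (M * t))) has_real_derivative 0) (at t within {0..T})"
    if t: "t \<in> {0..T}" for t
  proof -
    have e: "((\<lambda>t. exp (- (M * t))) has_real_derivative exp (- (M * t)) * (- M)) (at t within {0..T})"
      by (auto intro!: derivative_eq_intros)
    show ?thesis
      by (rule DERIV_cong[OF DERIV_mult[OF yd[OF t] e]]) (simp add: algebra_simps)
  qed
  obtain C where C: "\<forall>t\<in>{0..T}. y t * exp (- (M * t)) = C"
    using has_field_derivative_zero_constant[of "{0..T}", OF convex_real_interval(5) Gd] by blast
  have "0 \<in> {0..T}" using T by auto
  then have "y 0 * exp (- (M * 0)) = C" using C by blast
  then have C0: "y 0 = C" by simp
  have ysol: "y t = y 0 * exp (M * t)" if t: "t \<in> {0..T}" for t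
  proof -
    have "y t * exp (- (M * t)) = y 0" using C t C0 by blast
    then have h: "y t * exp (- (M * t)) * exp (M * t) = y 0 * exp (M * t)" by simp
    have one: "exp (- (M * t)) * exp (M * t) = 1" by (subst mult.commute) (rule exp_minus_inverse)
    have "y t = y t * (exp (- (M * t)) * exp (M * t))" by (simp only: one mult_1_right)
    also have "\<dots> = y 0 * exp (M * t)" using h by (simp only: mult.assoc)
    finally show ?thesis .
  qed
  show ?thesis
  proof
    fix t assume t: "t \<in> {0..T}"
    have fI: "((\<lambda>s. y s * fst (u s)) has_integral (x t - x 0)) {0..t}" using xI t by blast
    have eqf: "y s * fst (u s) = y 0 * (exp (M * s) * fst (u s))" if "s \<in> {0..t}" for s
    proof -
      have "s \<in> {0..T}" using that t by auto
      then have "y s = y 0 * exp (M * s)" by (rule ysol)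
      then show ?thesis by simp
    qed
    have gI: "((\<lambda>s. y 0 * (exp (M * s) * fst (u s))) has_integral (x t - x 0)) {0..t}"
      by (rule iffD1[OF has_integral_cong[OF eqf] fI])
    have y0ne: "y 0 \<noteq> 0" using y0 by simp
    have "((\<lambda>s. exp (M * s) * fst (u s)) has_integral ((x t - x 0) / y 0)) {0..t}"
      by (rule has_integral_mult_right_iff[OF y0ne, THEN iffD1, OF gI])
    then have "integral {0..t} (\<lambda>s. exp (M * s) * fst (u s)) = (x t - x 0) / y 0"
      by (rule integral_unique)
    then show "x t = x 0 + y 0 * integral {0..t} (\<lambda>s. exp (M * s) * fst (u s)) \<and>
                     y t = y 0 * exp (M * t)" using ysol[OF t] y0 by simp
  qed
qed

lemma gbound:
  fixes P f1 f2 dy dq qb ya B Q Y \<eta> :: real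
  assumes "\<bar>f1\<bar> \<le> B" "\<bar>f2\<bar> \<le> B" "\<bar>dy\<bar> \<le> \<eta>" "\<bar>dq\<bar> \<le> \<eta>" "\<bar>qb\<bar> \<le> Q" "\<bar>ya\<bar> \<le> Y"
  shows "\<bar>P * f1 * dy + f2 * (qb * dy + ya * dq)\<bar> \<le> B * \<eta> * (\<bar>P\<bar> + Q + Y)"
proof -
  have B0: "0 \<le> B" using assms(1) by linarith
  have e0: "0 \<le> \<eta>" using assms(3) by linarith
  have 1: "\<bar>P * f1 * dy\<bar> \<le> \<bar>P\<bar> * B * \<eta>"
    unfolding abs_mult by (intro mult_mono) (use assms B0 e0 in auto)
  have 2: "\<bar>qb * dy\<bar> \<le> Q * \<eta>"
    unfolding abs_mult by (intro mult_mono) (use assms B0 e0 in auto)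
  have 3: "\<bar>ya * dq\<bar> \<le> Y * \<eta>"
    unfolding abs_mult by (intro mult_mono) (use assms B0 e0 in auto)
  have 4: "\<bar>qb * dy + ya * dq\<bar> \<le> Q * \<eta> + Y * \<eta>" using 2 3 by linarith
  have 5: "\<bar>f2 * (qb * dy + ya * dq)\<bar> \<le> B * (Q * \<eta> + Y * \<eta>)"
    unfolding abs_mult[of f2] by (intro mult_mono) (use assms 4 B0 in auto)
  have "\<bar>P * f1 * dy + f2 * (qb * dy + ya * dq)\<bar> \<le> \<bar>P\<bar> * B * \<eta> + B * (Q * \<eta> + Y * \<eta>)"
    using 1 5 by linarith
  also have "\<dots> = B * \<eta> * (\<bar>P\<bar> + Q + Y)" by (simp add: algebra_simps)
  finally show ?thesis .
qed

lemma conserv: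
  fixes T P B :: real and x y p q :: "real \<Rightarrow> real" and u :: "real \<Rightarrow> real \<times> real"
  assumes xI: "\<forall>t\<in>{0..T}. ((\<lambda>s. y s * fst (u s)) has_integral (x t - x 0)) {0..t}"
    and yI: "\<forall>t\<in>{0..T}. ((\<lambda>s. y s * snd (u s)) has_integral (y t - y 0)) {0..t}"
    and qI: "\<forall>t\<in>{0..T}. ((\<lambda>s. - (p s * fst (u s) + q s * snd (u s))) has_integral (q t - q 0)) {0..t}"
    and pP: "\<forall>t\<in>{0..T}. p t = P"
    and uB: "\<forall>t\<in>{0..T}. \<bar>fst (u t)\<bar> \<le> B \<and> \<bar>snd (u t)\<bar> \<le> B"
    and T: "0 < T" and B0: "0 \<le> B"
  shows "\<forall>t\<in>{0..T}. P * x t + q t * y t = P * x 0 + q 0 * y 0"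
proof -
  have yc: "continuous_on {0..T} y" by (rule cont_int[OF yI less_imp_le[OF T]])
  have qc: "continuous_on {0..T} q" by (rule cont_int[OF qI less_imp_le[OF T]])
  obtain Y where Y: "\<forall>t\<in>{0..T}. \<bar>y t\<bar> \<le> Y"
    using compact_imp_bounded[OF compact_continuous_image[OF yc compact_Icc]] unfolding bounded_real by auto
  obtain Q where Q: "\<forall>t\<in>{0..T}. \<bar>q t\<bar> \<le> Q"
    using compact_imp_bounded[OF compact_continuous_image[OF qc compact_Icc]] unfolding bounded_real by auto
  have Y0: "0 \<le> Y" and Q0: "0 \<le> Q" using Y Q T by (metis abs_ge_zero atLeastAtMost_iff less_imp_le order.trans order_refl)+
  have yu: "uniformly_continuous_on {0..T} y" by (rule compact_uniformly_continuous[OF yc compact_Icc])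
  have qu: "uniformly_continuous_on {0..T} q" by (rule compact_uniformly_continuous[OF qc compact_Icc])
  define F where "F t = P * x t + q t * y t" for t
  have KC: "\<exists>\<delta>>0. \<forall>a b. 0 \<le> a \<longrightarrow> a \<le> b \<longrightarrow> b \<le> T \<longrightarrow> b - a < \<delta> \<longrightarrow> \<bar>F b - F a\<bar> \<le> \<epsilon> * (b - a)"
    if e: "\<epsilon> > 0" for \<epsilon>
  proof -
    define K where "K = B * (\<bar>P\<bar> + Q + Y) + 1"
    have K0: "K > 0" unfolding K_def using B0 Q0 Y0 by (simp add: add_nonneg_pos)
    define \<eta> where "\<eta> = \<epsilon> / K"
    have e0: "\<eta> > 0" unfolding \<eta>_def using e K0 by simp
    obtain d1 where d1: "d1 > 0" "\<forall>s\<in>{0..T}. \<forall>s'\<in>{0..T}. dist s' s < d1 \<longrightarrow> dist (y s') (y s) < \<eta>"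
      using yu e0 unfolding uniformly_continuous_on_def by metis
    obtain d2 where d2: "d2 > 0" "\<forall>s\<in>{0..T}. \<forall>s'\<in>{0..T}. dist s' s < d2 \<longrightarrow> dist (q s') (q s) < \<eta>"
      using qu e0 unfolding uniformly_continuous_on_def by metis
    show ?thesis
    proof (intro exI[of _ "min d1 d2"] conjI allI impI)
      show "min d1 d2 > 0" using d1 d2 by simp
      fix a b assume ab: "0 \<le> a" "a \<le> b" "b \<le> T" "b - a < min d1 d2"
      have aT: "a \<in> {0..T}" and bT: "b \<in> {0..T}" using ab by auto
      have I1: "((\<lambda>s. y s * fst (u s)) has_integral (x b - x 0 - (x a - x 0))) {a..b}"
        using int_sub xI aT bT ab by blast
      have I2: "((\<lambda>s. y s * snd (u s)) has_integral (y b - y 0 - (y a - y 0))) {a..b}"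
        using int_sub yI aT bT ab by blast
      have I3: "((\<lambda>s. - (p s * fst (u s) + q s * snd (u s))) has_integral (q b - q 0 - (q a - q 0))) {a..b}"
        using int_sub qI aT bT ab by blast
      define g where "g s = P * (y s * fst (u s)) + q b * (y s * snd (u s)) + y a * (- (p s * fst (u s) + q s * snd (u s)))" for s
      have "(g has_integral (P * (x b - x 0 - (x a - x 0)) + q b * (y b - y 0 - (y a - y 0)) + y a * (q b - q 0 - (q a - q 0)))) {a..b}"
        unfolding g_def by (intro has_integral_add has_integral_mult_right I1 I2 I3)
      moreover have "P * (x b - x 0 - (x a - x 0)) + q b * (y b - y 0 - (y a - y 0)) + y a * (q b - q 0 - (q a - q 0)) = F b - F a"
        unfolding F_def by (simp add: algebra_simps)
      ultimately have gI: "(g has_integral (F b - F a)) {a..b}" by simp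
      have gb: "norm (g s) \<le> \<epsilon>" if s: "s \<in> {a..b} - {}" for s
      proof -
        have sT: "s \<in> {0..T}" using s ab by auto
        have "g s = P * fst (u s) * (y s - y a) + snd (u s) * (q b * (y s - y a) + y a * (q b - q s))"
          unfolding g_def using pP sT by (simp add: algebra_simps)
        moreover have "\<bar>y s - y a\<bar> \<le> \<eta>"
        proof -
          have "dist s a < d1" using s ab by (auto simp: dist_real_def)
          then have "dist (y s) (y a) < \<eta>" using d1(2) aT sT by blast
          then show ?thesis by (simp add: dist_real_def)
        qed
        moreover have "\<bar>q b - q s\<bar> \<le> \<eta>"
        proof -
          have "dist b s < d2" using s ab by (auto simp: dist_real_def)
          then have "dist (q b) (q s) < \<eta>" using d2(2) bT sT by blast
          then show ?thesis by (simp add: dist_real_def)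
        qed
        ultimately have "\<bar>g s\<bar> \<le> B * \<eta> * (\<bar>P\<bar> + Q + Y)"
          using gbound uB sT Q bT Y aT by metis
        also have "\<dots> \<le> \<eta> * K" unfolding K_def using e0 by (simp add: algebra_simps)
        also have "\<dots> = \<epsilon>" unfolding \<eta>_def using K0 by simp
        finally show ?thesis by simp
      qed
      have "norm (F b - F a) \<le> \<epsilon> * measure lborel {a..b}"
        by (rule has_integral_bound_real[OF _ _ gI gb]) (use e in auto)
      then show "\<bar>F b - F a\<bar> \<le> \<epsilon> * (b - a)" using ab by simp
    qed
  qed
  have Fd: "(F has_real_derivative 0) (at s within {0..T})" if s: "s \<in> {0..T}" for s
    unfolding has_field_derivative_iff tendsto_iff eventually_at
  proof (intro allI impI)
    fix \<epsilon> :: real assume e: "\<epsilon> > 0"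
    obtain \<delta> where d: "\<delta> > 0" "\<forall>a b. 0 \<le> a \<longrightarrow> a \<le> b \<longrightarrow> b \<le> T \<longrightarrow> b - a < \<delta> \<longrightarrow> \<bar>F b - F a\<bar> \<le> \<epsilon>/2 * (b - a)"
      using KC[of "\<epsilon>/2"] e by auto
    show "\<exists>d>0. \<forall>t\<in>{0..T}. t \<noteq> s \<and> dist t s < d \<longrightarrow> dist ((F t - F s) / (t - s)) 0 < \<epsilon>"
    proof (intro exI[of _ \<delta>] conjI ballI impI)
      show "\<delta> > 0" by (rule d(1))
      fix t assume t: "t \<in> {0..T}" "t \<noteq> s \<and> dist t s < \<delta>"
      have "\<bar>F t - F s\<bar> \<le> \<epsilon>/2 * \<bar>t - s\<bar>"
      proof (cases "s \<le> t")
        case True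
        then show ?thesis using d(2)[rule_format, of s t] s t by (auto simp: dist_real_def)
      next
        case False
        then have "\<bar>F s - F t\<bar> \<le> \<epsilon>/2 * (s - t)" using d(2)[rule_format, of t s] s t by (auto simp: dist_real_def)
        then show ?thesis using False by (simp add: abs_minus_commute)
      qed
      then have "\<bar>(F t - F s) / (t - s)\<bar> \<le> \<epsilon>/2"
        using t by (simp add: abs_divide divide_le_eq)
      then have "\<bar>(F t - F s) / (t - s)\<bar> < \<epsilon>" using e by linarith
      then show "dist ((F t - F s) / (t - s)) 0 < \<epsilon>" by (simp add: dist_real_def)
    qed
  qed
  obtain C where C: "\<forall>t\<in>{0..T}. F t = C"
    using has_field_derivative_zero_constant[of "{0..T}", OF convex_real_interval(5) Fd] by blast
  have "0 \<in> {0..T}" using T by auto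
  then show ?thesis using C unfolding F_def by metis
qed

lemma polarD:
  assumes "z \<in> polar \<Omega>" "v \<in> \<Omega>"
  shows "fst z * fst v + snd z * snd v \<le> 1"
proof -
  obtain p q where z: "z = (p, q)" by (cases z)
  obtain a b where v: "v = (a, b)" by (cases v)
  have "\<forall>(a, b)\<in>\<Omega>. p * a + q * b \<le> 1" using assms(1) unfolding polar_def z by simp
  then show ?thesis using assms(2) unfolding z v by auto
qed

theorem theorem1:
  fixes \<Omega> :: "(real \<times> real) set" and T :: real
    and u :: "real \<Rightarrow> real \<times> real" and x y p q :: "real \<Rightarrow> real"
  assumes "convex \<Omega>" and "compact \<Omega>" and "(0, 0) \<in> interior \<Omega>"
    and "T > 0"
    and "extremal \<Omega> T u x y p q"
  shows
    "(\<exists>\<sigma> \<in> {1, -1}. \<exists>k > 0. \<exists>c.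
        (\<forall>t\<in>{0..T}. (x t - c, y t) \<in> (\<lambda>w. k *\<^sub>R rot90 \<sigma> w) ` frontier (polar \<Omega>)) \<and>
        (AE t in lebesgue. t \<in> {0..T} \<longrightarrow>
           \<sigma> * ((x t - c) * (y t * snd (u t)) - y t * (y t * fst (u t))) < 0))
   \<or> (let M = Sup (snd ` \<Omega>) in
        (AE t in lebesgue. t \<in> {0..T} \<longrightarrow> snd (u t) = M) \<and>
        (\<forall>t\<in>{0..T}. x t = x 0 + y 0 * integral {0..t} (\<lambda>s. exp (M * s) * fst (u s)) \<and>
                     y t = y 0 * exp (M * t)))
   \<or> (let m = Inf (snd ` \<Omega>) in
        (AE t in lebesgue. t \<in> {0..T} \<longrightarrow> snd (u t) = m) \<and>
        (\<forall>t\<in>{0..T}. x t = x 0 + y 0 * integral {0..t} (\<lambda>s. exp (m * s) * fst (u s)) \<and>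
                     y t = y 0 * exp (m * t)))"
proof -
  note E = assms(5)[unfolded extremal_def]
  have uO: "\<forall>t\<in>{0..T}. u t \<in> \<Omega>"
    by (rule E[THEN conjunct2, THEN conjunct1])
  have ypos: "\<forall>t\<in>{0..T}. y t > 0"
    by (rule E[THEN conjunct2, THEN conjunct2, THEN conjunct1])
  have xI: "\<forall>t\<in>{0..T}. ((\<lambda>s. y s * fst (u s)) has_integral (x t - x 0)) {0..t}"
    by (rule E[THEN conjunct2, THEN conjunct2, THEN conjunct2, THEN conjunct1])
  have yI: "\<forall>t\<in>{0..T}. ((\<lambda>s. y s * snd (u s)) has_integral (y t - y 0)) {0..t}"
    by (rule E[THEN conjunct2, THEN conjunct2, THEN conjunct2, THEN conjunct2, THEN conjunct1])
  have pc: "\<forall>t\<in>{0..T}. p t = p 0"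
    by (rule E[THEN conjunct2, THEN conjunct2, THEN conjunct2, THEN conjunct2, THEN conjunct2, THEN conjunct1])
  have qI: "\<forall>t\<in>{0..T}. ((\<lambda>s. - (p s * fst (u s) + q s * snd (u s))) has_integral (q t - q 0)) {0..t}"
    by (rule E[THEN conjunct2, THEN conjunct2, THEN conjunct2, THEN conjunct2, THEN conjunct2, THEN conjunct2, THEN conjunct1])
  have pq0: "\<forall>t\<in>{0..T}. (p t, q t) \<noteq> (0, 0)"
    by (rule E[THEN conjunct2, THEN conjunct2, THEN conjunct2, THEN conjunct2, THEN conjunct2, THEN conjunct2, THEN conjunct2, THEN conjunct1])
  have maxc: "AE t in lebesgue. t \<in> {0..T} \<longrightarrow>
        (\<forall>v\<in>\<Omega>. y t * (p t * fst v + q t * snd v) \<le> y t * (p t * fst (u t) + q t * snd (u t)))"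
    by (rule E[THEN conjunct2, THEN conjunct2, THEN conjunct2, THEN conjunct2, THEN conjunct2, THEN conjunct2, THEN conjunct2, THEN conjunct2, THEN conjunct1])
  have hex: "\<exists>h\<ge>0. AE t in lebesgue. t \<in> {0..T} \<longrightarrow>
        y t * (p t * fst (u t) + q t * snd (u t)) = h"
    by (rule E[THEN conjunct2, THEN conjunct2, THEN conjunct2, THEN conjunct2, THEN conjunct2, THEN conjunct2, THEN conjunct2, THEN conjunct2, THEN conjunct2])
  have T: "0 < T" by (rule assms(4))
  have T0: "0 \<in> {0..T}" using T by auto
  have y0: "y 0 > 0" using ypos T0 by blast
  obtain B where B: "\<forall>v\<in>\<Omega>. norm v \<le> B"
    using compact_imp_bounded[OF assms(2)] unfolding bounded_iff by blast
  have O0: "(0, 0) \<in> \<Omega>" using assms(3) interior_subset by blast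
  have B0: "0 \<le> B" using B O0 by (metis norm_ge_zero order.trans)
  have uB: "\<forall>t\<in>{0..T}. \<bar>fst (u t)\<bar> \<le> B \<and> \<bar>snd (u t)\<bar> \<le> B"
  proof
    fix t assume "t \<in> {0..T}"
    then have "norm (u t) \<le> B" using uO B by blast
    moreover have "norm (fst (u t)) \<le> norm (u t)" "norm (snd (u t)) \<le> norm (u t)"
      using norm_fst_le[of "fst (u t)" "snd (u t)"] norm_snd_le[of "snd (u t)" "fst (u t)"] by auto
    ultimately show "\<bar>fst (u t)\<bar> \<le> B \<and> \<bar>snd (u t)\<bar> \<le> B" by auto
  qed
  obtain r where r: "r > 0" "ball (0, 0) r \<subseteq> \<Omega>" using assms(3) unfolding mem_interior by blast
  define P where "P = p 0"
  have pP: "\<forall>t\<in>{0..T}. p t = P" using pc unfolding P_def by blast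
  show ?thesis
  proof (cases "P = 0")
    case True
    have qne: "\<forall>t\<in>{0..T}. q t \<noteq> 0" using pq0 pP True by auto
    have qc: "continuous_on {0..T} q" by (rule cont_int[OF qI less_imp_le[OF T]])
    have sign: "(\<forall>t\<in>{0..T}. q t > 0) \<or> (\<forall>t\<in>{0..T}. q t < 0)"
    proof (rule ccontr)
      assume "\<not> ?thesis"
      then obtain a b where ab0: "a \<in> {0..T}" "b \<in> {0..T}" "\<not> q a > 0" "\<not> q b < 0"
        by blast
      then have ab: "a \<in> {0..T}" "b \<in> {0..T}" "q a < 0" "q b > 0"
        using qne by force+
      show False
      proof (cases "a \<le> b")
        case True
        have "continuous_on {a..b} q" using qc ab by (auto intro: continuous_on_subset)
        then obtain z where "a \<le> z" "z \<le> b" "q z = 0" using IVT'[of q a 0 b] ab True by auto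
        then show False using qne ab by auto
      next
        case False
        have "continuous_on {b..a} q" using qc ab by (auto intro: continuous_on_subset)
        then obtain z where "b \<le> z" "z \<le> a" "q z = 0" using IVT2'[of q a 0 b] ab False by auto
        then show False using qne ab by auto
      qed
    qed
    from sign show ?thesis
    proof
      assume qp: "\<forall>t\<in>{0..T}. q t > 0"
      define M where "M = Sup (snd ` \<Omega>)"
      have ae: "AE t in lebesgue. t \<in> {0..T} \<longrightarrow> snd (u t) = M"
      proof (rule eventually_mono[OF maxc], intro impI)
        fix t assume mx: "t \<in> {0..T} \<longrightarrow> (\<forall>v\<in>\<Omega>. y t * (p t * fst v + q t * snd v) \<le> y t * (p t * fst (u t) + q t * snd (u t)))"
          and t: "t \<in> {0..T}"
        have yq: "y t * q t > 0" using ypos qp t by auto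
        have "snd v \<le> snd (u t)" if "v \<in> \<Omega>" for v
        proof -
          have "(y t * q t) * snd v \<le> (y t * q t) * snd (u t)"
            using mx t that pP True by (auto simp: algebra_simps)
          then show ?thesis using yq by (simp add: mult_le_cancel_left)
        qed
        then show "snd (u t) = M" unfolding M_def
          using uO t by (intro cSup_eq_maximum[symmetric]) auto
      qed
      have "\<forall>t\<in>{0..T}. x t = x 0 + y 0 * integral {0..t} (\<lambda>s. exp (M * s) * fst (u s)) \<and>
                     y t = y 0 * exp (M * t)" by (rule vert[OF xI yI ae T y0])
      then have "let M = Sup (snd ` \<Omega>) in
        (AE t in lebesgue. t \<in> {0..T} \<longrightarrow> snd (u t) = M) \<and>
        (\<forall>t\<in>{0..T}. x t = x 0 + y 0 * integral {0..t} (\<lambda>s. exp (M * s) * fst (u s)) \<and>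
                     y t = y 0 * exp (M * t))" using ae unfolding Let_def M_def[symmetric] by (rule conjI[rotated])
      then show ?thesis by (rule disjI2[OF disjI1])
    next
      assume qn: "\<forall>t\<in>{0..T}. q t < 0"
      define m where "m = Inf (snd ` \<Omega>)"
      have ae: "AE t in lebesgue. t \<in> {0..T} \<longrightarrow> snd (u t) = m"
      proof (rule eventually_mono[OF maxc], intro impI)
        fix t assume mx: "t \<in> {0..T} \<longrightarrow> (\<forall>v\<in>\<Omega>. y t * (p t * fst v + q t * snd v) \<le> y t * (p t * fst (u t) + q t * snd (u t)))"
          and t: "t \<in> {0..T}"
        have yq: "y t * q t < 0" using ypos qn t by (simp add: mult_pos_neg)
        have "snd (u t) \<le> snd v" if "v \<in> \<Omega>" for v
        proof -
          have "(y t * q t) * snd v \<le> (y t * q t) * snd (u t)"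
            using mx t that pP True by (auto simp: algebra_simps)
          then show ?thesis using yq by (simp add: mult_le_cancel_left)
        qed
        then show "snd (u t) = m" unfolding m_def
          using uO t by (intro cInf_eq_minimum[symmetric]) auto
      qed
      have "\<forall>t\<in>{0..T}. x t = x 0 + y 0 * integral {0..t} (\<lambda>s. exp (m * s) * fst (u s)) \<and>
                     y t = y 0 * exp (m * t)" by (rule vert[OF xI yI ae T y0])
      then have "let m = Inf (snd ` \<Omega>) in
        (AE t in lebesgue. t \<in> {0..T} \<longrightarrow> snd (u t) = m) \<and>
        (\<forall>t\<in>{0..T}. x t = x 0 + y 0 * integral {0..t} (\<lambda>s. exp (m * s) * fst (u s)) \<and>
                     y t = y 0 * exp (m * t))" using ae unfolding Let_def m_def[symmetric] by (rule conjI[rotated])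
      then show ?thesis by (rule disjI2[OF disjI2])
    qed
  next
    case False
    have cons: "\<forall>t\<in>{0..T}. P * x t + q t * y t = P * x 0 + q 0 * y 0"
      by (rule conserv[OF xI yI qI pP uB T B0])
    define c where "c = (P * x 0 + q 0 * y 0) / P"
    have xc: "x t - c = - (q t * y t) / P" if "t \<in> {0..T}" for t
    proof -
      have "P * x t + q t * y t = P * x 0 + q 0 * y 0" using cons that by blast
      also have "\<dots> = P * c" unfolding c_def using False by simp
      finally have "P * (x t - c) = - (q t * y t)" by (simp add: algebra_simps)
      then show ?thesis using False by (metis nonzero_mult_div_cancel_left)
    qed
    obtain h where h0: "h \<ge> 0" and hae: "AE t in lebesgue. t \<in> {0..T} \<longrightarrow>
        y t * (p t * fst (u t) + q t * snd (u t)) = h" using hex by blast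
    have ae2: "AE t in lebesgue. t \<in> {0..T} \<longrightarrow>
        (\<forall>v\<in>\<Omega>. y t * (P * fst v + q t * snd v) \<le> h) \<and> y t * (P * fst (u t) + q t * snd (u t)) = h"
      by (rule eventually_mono[OF eventually_conj[OF maxc hae]]) (use pP in auto)
    obtain t0 where t0: "t0 \<in> {0..T}" "\<forall>v\<in>\<Omega>. y t0 * (P * fst v + q t0 * snd v) \<le> h"
      using ae_exists[OF ae2, of 0 T] T by auto
    have hpos: "h > 0"
    proof -
      define \<epsilon> where "\<epsilon> = r / (2 * (\<bar>P\<bar> + \<bar>q t0\<bar>))"
      have den: "\<bar>P\<bar> + \<bar>q t0\<bar> > 0" using False by auto
      have e0: "\<epsilon> > 0" unfolding \<epsilon>_def using r den by simp
      have "norm (\<epsilon> * P, \<epsilon> * q t0) \<le> norm (\<epsilon> * P) + norm (\<epsilon> * q t0)" by (rule norm_Pair_le)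
      also have "\<dots> = \<epsilon> * (\<bar>P\<bar> + \<bar>q t0\<bar>)" using e0 by (simp add: abs_mult algebra_simps)
      also have "\<dots> = r / 2" unfolding \<epsilon>_def using den by (simp add: field_simps)
      finally have nb: "norm (\<epsilon> * P, \<epsilon> * q t0) \<le> r / 2" .
      have "(\<epsilon> * P, \<epsilon> * q t0) \<in> ball 0 r" using nb r(1) by (simp add: mem_ball_0)
      moreover have "ball (0::real\<times>real) r = ball (0, 0) r" by (simp add: zero_prod_def)
      ultimately have "(\<epsilon> * P, \<epsilon> * q t0) \<in> \<Omega>" using r(2) by auto
      then have "y t0 * (P * (\<epsilon> * P) + q t0 * (\<epsilon> * q t0)) \<le> h" using t0 by auto
      moreover have "y t0 * (P * (\<epsilon> * P) + q t0 * (\<epsilon> * q t0)) > 0"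
      proof -
        have PP: "P * P > 0" using False by (cases "P > 0") (auto intro: mult_pos_pos mult_neg_neg)
        have "P * (\<epsilon> * P) = \<epsilon> * (P * P)" by (simp add: algebra_simps)
        also have "\<dots> > 0" using e0 PP by (rule mult_pos_pos)
        finally have "P * (\<epsilon> * P) > 0" .
        moreover have "q t0 * (\<epsilon> * q t0) \<ge> 0"
        proof -
          have "q t0 * (\<epsilon> * q t0) = \<epsilon> * (q t0 * q t0)" by (simp add: algebra_simps)
          also have "\<dots> \<ge> 0" using e0 zero_le_square[of "q t0"] by (rule mult_nonneg_nonneg[OF less_imp_le])
          finally show ?thesis .
        qed
        ultimately have s0: "P * (\<epsilon> * P) + q t0 * (\<epsilon> * q t0) > 0" by linarith
        have "y t0 > 0" using ypos t0(1) by blast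
        then show ?thesis using s0 by (rule mult_pos_pos)
      qed
      ultimately show ?thesis by linarith
    qed
    define w where "w t = (P * y t / h, q t * y t / h)" for t
    have yc: "continuous_on {0..T} y" by (rule cont_int[OF yI less_imp_le[OF T]])
    have qc: "continuous_on {0..T} q" by (rule cont_int[OF qI less_imp_le[OF T]])
    have wc: "continuous_on {0..T} w" unfolding w_def using yc qc hpos by (intro continuous_intros) auto
    have wgood: "w t \<in> frontier (polar \<Omega>)" if t: "t \<in> {0..T}"
        and g: "(\<forall>v\<in>\<Omega>. y t * (P * fst v + q t * snd v) \<le> h) \<and> y t * (P * fst (u t) + q t * snd (u t)) = h" for t
    proof -
      have lin: "fst (s *\<^sub>R w t) * fst v + snd (s *\<^sub>R w t) * snd v = s * (y t * (P * fst v + q t * snd v)) / h" for s v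
        using hpos unfolding w_def by (simp add: field_simps)
      have A: "(P * y t / h) * a + (q t * y t / h) * b \<le> 1" if ab: "(a, b) \<in> \<Omega>" for a b
      proof -
        have le: "y t * (P * a + q t * b) \<le> h" using g ab by auto
        have "(P * y t / h) * a + (q t * y t / h) * b = (y t * (P * a + q t * b)) / h"
          using hpos by (simp add: field_simps)
        also have "\<dots> \<le> 1" using le hpos by (simp add: divide_le_eq)
        finally show ?thesis .
      qed
      have inp: "w t \<in> polar \<Omega>"
        unfolding polar_def w_def using A by auto
      have "w t \<notin> interior (polar \<Omega>)"
      proof
        assume "w t \<in> interior (polar \<Omega>)"
        then obtain e where e: "e > 0" "ball (w t) e \<subseteq> polar \<Omega>" unfolding mem_interior by blast
        define d where "d = e / (2 * (norm (w t) + 1))"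
        have d0: "d > 0" unfolding d_def using e by (simp add: add_nonneg_pos)
        have "dist (w t) ((1 + d) *\<^sub>R w t) = d * norm (w t)"
          using d0 by (simp add: dist_norm algebra_simps)
        also have "\<dots> < e"
        proof -
          have "d * norm (w t) \<le> d * (norm (w t) + 1)" using d0 by simp
          also have "\<dots> = e / 2"
          proof -
            have nz: "norm (w t) + 1 > 0" using norm_ge_zero[of "w t"] by linarith
            then show ?thesis unfolding d_def by (simp add: field_simps)
          qed
          finally show ?thesis using e by simp
        qed
        finally have "(1 + d) *\<^sub>R w t \<in> polar \<Omega>" using e by auto
        then have "fst ((1 + d) *\<^sub>R w t) * fst (u t) + snd ((1 + d) *\<^sub>R w t) * snd (u t) \<le> 1"
          by (rule polarD[OF _ uO[rule_format, OF t]])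
        then have "(1 + d) * (y t * (P * fst (u t) + q t * snd (u t))) / h \<le> 1" by (simp only: lin)
        then show False using g hpos d0 by simp
      qed
      then show ?thesis unfolding frontier_def using inp closure_subset by blast
    qed
    have wall: "\<forall>t\<in>{0..T}. w t \<in> frontier (polar \<Omega>)"
      using ae_closed[OF ae2 T wc frontier_closed wgood] by blast
    define \<sigma> :: real where "\<sigma> = (if P > 0 then 1 else -1)"
    define k where "k = h / \<bar>P\<bar>"
    have sP: "\<sigma> / \<bar>P\<bar> = 1 / P" unfolding \<sigma>_def using False by auto
    have k0: "k > 0" unfolding k_def using hpos False by simp
    have img: "(x t - c, y t) \<in> (\<lambda>w. k *\<^sub>R rot90 \<sigma> w) ` frontier (polar \<Omega>)" if t: "t \<in> {0..T}" for t
    proof (rule image_eqI[OF _ wall[rule_format, OF t]])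
      have "k * (- \<sigma> * (q t * y t / h)) = - (q t * y t) * (\<sigma> / \<bar>P\<bar>)" unfolding k_def using hpos by (simp add: field_simps)
      also have "\<dots> = x t - c" using xc[OF t] sP by simp
      finally have 1: "k * (- \<sigma> * (q t * y t / h)) = x t - c" .
      have "k * (\<sigma> * (P * y t / h)) = y t * P * (\<sigma> / \<bar>P\<bar>)" unfolding k_def using hpos by (simp add: field_simps)
      also have "\<dots> = y t" using sP False by simp
      finally have 2: "k * (\<sigma> * (P * y t / h)) = y t" .
      show "(x t - c, y t) = k *\<^sub>R rot90 \<sigma> (w t)"
        unfolding rot90_def w_def using 1 2 by simp
    qed
    have dir: "AE t in lebesgue. t \<in> {0..T} \<longrightarrow>
           \<sigma> * ((x t - c) * (y t * snd (u t)) - y t * (y t * fst (u t))) < 0"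
    proof (rule eventually_mono[OF ae2], intro impI)
      fix t assume g: "t \<in> {0..T} \<longrightarrow> (\<forall>v\<in>\<Omega>. y t * (P * fst v + q t * snd v) \<le> h) \<and> y t * (P * fst (u t) + q t * snd (u t)) = h"
        and t: "t \<in> {0..T}"
      have H: "y t * (P * fst (u t) + q t * snd (u t)) = h" using g t by blast
      have X: "x t - c = - (q t * y t) / P" by (rule xc[OF t])
      have sP2: "\<sigma> / P = 1 / \<bar>P\<bar>" unfolding \<sigma>_def using False by auto
      have "\<sigma> * ((x t - c) * (y t * snd (u t)) - y t * (y t * fst (u t)))
          = \<sigma> * ((- (q t * y t) / P) * (y t * snd (u t)) - y t * (y t * fst (u t)))"
        by (simp only: X)
      also have "\<dots> = - (\<sigma> / P) * y t * (y t * (P * fst (u t) + q t * snd (u t)))"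
        using False by (simp add: field_simps)
      also have "\<dots> = - (1 / \<bar>P\<bar>) * y t * h" by (simp only: H sP2)
      also have "\<dots> = - (y t * h) / \<bar>P\<bar>" by simp
      also have "\<dots> < 0" using ypos t hpos False by simp
      finally show "\<sigma> * ((x t - c) * (y t * snd (u t)) - y t * (y t * fst (u t))) < 0" .
    qed
    have sig: "\<sigma> \<in> {1, -1}" unfolding \<sigma>_def by auto
    show ?thesis
    proof (rule disjI1, rule bexI[OF _ sig], rule exI[of _ k], rule conjI[OF k0], rule exI[of _ c], rule conjI)
      show "\<forall>t\<in>{0..T}. (x t - c, y t) \<in> (\<lambda>w. k *\<^sub>R rot90 \<sigma> w) ` frontier (polar \<Omega>)"
        using img by blast
      show "AE t in lebesgue. t \<in> {0..T} \<longrightarrow>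
           \<sigma> * ((x t - c) * (y t * snd (u t)) - y t * (y t * fst (u t))) < 0" by (rule dir)
    qed
  qed
qed

end
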